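(* Let $(\overline{\mathbf{v}}^n,\overline{\boldsymbol{\rho}}^n)_{n\in\mathbb{N}}$ be a supersolution and $(\underline{\mathbf{v}}^n,\underline{\boldsymbol{\rho}}^n)_{n\in\mathbb{N}}$ a subsolution of the iterative scheme described in the context. Assume that $\underline{v}^0_j(t,x)\le\overline{v}^0_j(t,x)$ and $\underline{\rho}^0_j(t)\le\overline{\rho}^0_j(t)$ for all $t\ge0$, $x\in[0,1]$, $j\in\mathbb{Z}$, and that for all $n\ge1$, $\underline{v}^n_j(0,x)\le\overline{v}^n_j(0,x)$ and $\underline{\rho}^n_j(0)\le\overline{\rho}^n_j(0)$ for $x\in[0,1]$, $j\in\mathbb{Z}$. Then for all $t>0$, $n\ge1$, $j\in\mathbb{Z}$: $\underline{v}^n_j(t,x)\le\overline{v}^n_j(t,x)$ for $x\in[0,1]$ and $\underline{\rho}^n_j(t)\le\overline{\rho}^n_j(t)$.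
   Context: Fix $\alpha,\beta,d>0$ and $f\in\mathscr{C}^1([0,1])$ with $f(0)=f(1)=0$, $0<f(u)\le f'(0)u$ on $(0,1)$, extended to a locally Lipschitz function on $\mathbb{R}$ negative on $\mathbb{R}\setminus[0,1]$. Consider sequences indexed by $n\in\mathbb{N}$ of pairs $(\mathbf{v}^n,\boldsymbol{\rho}^n)=(v^n_j,\rho^n_j)_{j\in\mathbb{Z}}$, where for $n=0$ the $v^0_j$ are continuous functions on $[0,+\infty)\times[0,1]$ and $\rho^0_j$ continuous on $[0,+\infty)$, and for every $n\ge1$ and $j$: $\rho^n_j\in\mathscr{C}^1([0,+\infty))$, $v^n_j\in\mathscr{C}^0([0,+\infty)\times[0,1])$, $\partial_tv^n_j,\partial_x^2v^n_j\in\mathscr{C}^0((0,+\infty)\times(0,1))$, $\partial_xv^n_j\in\mathscr{C}^0((0,+\infty)\times[0,1])$. Such a sequence $(\overline{\mathbf{v}}^n,\overline{\boldsymbol{\rho}}^n)_n$ is a supersolution of the iterative scheme if for all $n\ge1$, $t>0$, $j\in\mathbb{Z}$: $\partial_t\overline{v}^n_j\ge d\,\partial_x^2\overline{v}^n_j$ on $(0,1)$; $(\overline{\rho}^n_j)'(t)\ge f(\overline{\rho}^n_j(t))+\alpha(\overline{v}^{n-1}_j(t,0)+\overline{v}^{n-1}_{j-1}(t,1))-2\beta\overline{\rho}^n_j(t)$; $-d\,\partial_x\overline{v}^n_j(t,0)+\alpha\overline{v}^n_j(t,0)\ge\beta\overline{\rho}^n_j(t)$; $d\,\partial_x\overline{v}^n_j(t,1)+\alpha\overline{v}^n_j(t,1)\ge\beta\overline{\rho}^n_{j+1}(t)$.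 A subsolution is defined with all these inequalities reversed. *)

theory Defs
  imports "HOL-Analysis.Analysis"
begin

text \<open>Indexing conventions: v n j t x stands for v^n_j(t,x), rho n j t for rho^n_j(t),
  with n :: nat, j :: int, t, x :: real.\<close>

definition reaction_ok :: "(real \<Rightarrow> real) \<Rightarrow> bool" where
  "reaction_ok f \<longleftrightarrow>
     (\<exists>f'. continuous_on {0..1} f' \<and>
        (\<forall>u\<in>{0..1}. (f has_real_derivative f' u) (at u within {0..1})) \<and>
        f 0 = 0 \<and> f 1 = 0 \<and>
        (\<forall>u\<in>{0<..<1}. 0 < f u \<and> f u \<le> f' 0 * u)) \<and>
     (\<forall>x. \<exists>r>0. \<exists>L. lipschitz_on L (cball x r) f) \<and>
     (\<forall>u. u \<notin> {0..1} \<longrightarrow> f u < 0)"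

definition initial_regular :: "(nat \<Rightarrow> int \<Rightarrow> real \<Rightarrow> real \<Rightarrow> real) \<Rightarrow> (nat \<Rightarrow> int \<Rightarrow> real \<Rightarrow> real) \<Rightarrow> bool" where
  "initial_regular v rho \<longleftrightarrow>
     (\<forall>j. continuous_on ({0..} \<times> {0..1}) (\<lambda>(t,x). v 0 j t x) \<and> continuous_on {0..} (rho 0 j))"

text \<open>The relation R is (\<ge>) for supersolutions and (\<le>) for subsolutions:
  every inequality "lhs \<ge> rhs" of the scheme is written "R lhs rhs".\<close>
definition scheme_rel ::
  "(real \<Rightarrow> real \<Rightarrow> bool) \<Rightarrow> (real \<Rightarrow> real) \<Rightarrow> real \<Rightarrow> real \<Rightarrow> real \<Rightarrow>
   (nat \<Rightarrow> int \<Rightarrow> real \<Rightarrow> real \<Rightarrow> real) \<Rightarrow> (nat \<Rightarrow> int \<Rightarrow> real \<Rightarrow> real) \<Rightarrow> bool" where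
  "scheme_rel R f \<alpha> \<beta> d v rho \<longleftrightarrow>
     initial_regular v rho \<and>
     (\<forall>n\<ge>1. \<forall>j. \<exists>vt vx vxx rho'.
        continuous_on ({0..} \<times> {0..1}) (\<lambda>(t,x). v n j t x) \<and>
        continuous_on ({0<..} \<times> {0<..<1}) (\<lambda>(t,x). vt t x) \<and>
        continuous_on ({0<..} \<times> {0<..<1}) (\<lambda>(t,x). vxx t x) \<and>
        continuous_on ({0<..} \<times> {0..1}) (\<lambda>(t,x). vx t x) \<and>
        (\<forall>t>0. \<forall>x\<in>{0<..<1}. ((\<lambda>s. v n j s x) has_real_derivative vt t x) (at t)) \<and>
        (\<forall>t>0. \<forall>x\<in>{0..1}. ((\<lambda>y. v n j t y) has_real_derivative vx t x) (at x within {0..1})) \<and>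
        (\<forall>t>0. \<forall>x\<in>{0<..<1}. ((\<lambda>y. vx t y) has_real_derivative vxx t x) (at x)) \<and>
        continuous_on {0..} rho' \<and>
        (\<forall>t\<ge>0. (rho n j has_real_derivative rho' t) (at t within {0..})) \<and>
        (\<forall>t>0.
          (\<forall>x\<in>{0<..<1}. R (vt t x) (d * vxx t x)) \<and>
          R (rho' t) (f (rho n j t) + \<alpha> * (v (n-1) j t 0 + v (n-1) (j-1) t 1) - 2 * \<beta> * rho n j t) \<and>
          R (- d * vx t 0 + \<alpha> * v n j t 0) (\<beta> * rho n j t) \<and>
          R (d * vx t 1 + \<alpha> * v n j t 1) (\<beta> * rho n (j+1) t)))"

definition supersolution where
  "supersolution f \<alpha> \<beta> d v rho \<longleftrightarrow> scheme_rel (\<lambda>a b. a \<ge> b) f \<alpha> \<beta> d v rho"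

definition subsolution where
  "subsolution f \<alpha> \<beta> d v rho \<longleftrightarrow> scheme_rel (\<lambda>a b. a \<le> b) f \<alpha> \<beta> d v rho"

end

theory Submission
  imports Defs
begin

lemma ode_cmp:
  fixes a b a' b' g h F :: "real \<Rightarrow> real" and c t0 :: real
  assumes loc: "\<forall>x. \<exists>r>0. \<exists>L. lipschitz_on L (cball x r) F"
    and da: "\<forall>t\<ge>0. (a has_real_derivative a' t) (at t within {0..})"
    and db: "\<forall>t\<ge>0. (b has_real_derivative b' t) (at t within {0..})"
    and ia: "\<forall>t>0. a' t \<ge> F (a t) + g t - c * a t"
    and ib: "\<forall>t>0. b' t \<le> F (b t) + h t - c * b t"
    and gh: "\<forall>t>0. h t \<le> g t"
    and i0: "b 0 \<le> a 0" and t0: "t0 \<ge> 0"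
  shows "b t0 \<le> a t0"
proof (rule ccontr)
  assume neg: "\<not> b t0 \<le> a t0"
  have ca: "continuous_on {0..t0} a"
    unfolding continuous_on_eq_continuous_within
  proof
    fix t assume "t \<in> {0..t0}"
    then have "t \<ge> 0" by auto
    then have "continuous (at t within {0..}) a" by (rule DERIV_continuous[OF da[rule_format]])
    then show "continuous (at t within {0..t0}) a" by (rule continuous_within_subset) auto
  qed
  have cb: "continuous_on {0..t0} b"
    unfolding continuous_on_eq_continuous_within
  proof
    fix t assume "t \<in> {0..t0}"
    then have "t \<ge> 0" by auto
    then have "continuous (at t within {0..}) b" by (rule DERIV_continuous[OF db[rule_format]])
    then show "continuous (at t within {0..t0}) b" by (rule continuous_within_subset) auto
  qed
  have "compact (a ` {0..t0})" by (rule compact_continuous_image[OF ca]) simp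
  then obtain Ma where Ma: "\<forall>y\<in>a ` {0..t0}. \<bar>y\<bar> \<le> Ma" using compact_imp_bounded bounded_real by blast
  have "compact (b ` {0..t0})" by (rule compact_continuous_image[OF cb]) simp
  then obtain Mb where Mb: "\<forall>y\<in>b ` {0..t0}. \<bar>y\<bar> \<le> Mb" using compact_imp_bounded bounded_real by blast
  define M where "M = max Ma Mb"
  have M: "\<forall>t\<in>{0..t0}. a t \<in> {-M..M} \<and> b t \<in> {-M..M}"
    using Ma Mb unfolding M_def by (auto simp: abs_le_iff)
  have "local_lipschitz {0::real} {-M..M} (\<lambda>_. F)"
    unfolding local_lipschitz_def
  proof (intro ballI)
    fix x t :: real assume "x \<in> {-M..M}" "t \<in> {0}"
    from loc obtain r L where "r>0" "L-lipschitz_on (cball x r) F" by blast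
    then show "\<exists>u>0. \<exists>L. \<forall>t\<in>cball t u \<inter> {0}. L-lipschitz_on (cball x u \<inter> {-M..M}) F"
      by (meson lipschitz_on_subset Int_lower1)
  qed
  then obtain L where L: "L-lipschitz_on {-M..M} F"
    using local_lipschitz_compact_implies_lipschitz[of "{0::real}" "{-M..M}" "\<lambda>_. F"] by auto
  have L0: "L \<ge> 0" using L lipschitz_on_nonneg by blast
  have lip: "\<bar>F x - F y\<bar> \<le> L * \<bar>x - y\<bar>" if "x \<in> {-M..M}" "y \<in> {-M..M}" for x y
    using lipschitz_onD[OF L that] by (simp add: dist_real_def)
  define K where "K = L + \<bar>c\<bar> + 1"
  define \<delta> where "\<delta> = b t0 - a t0"
  have \<delta>0: "\<delta> > 0" using neg \<delta>_def by simp
  define \<epsilon> where "\<epsilon> = \<delta> / (2 * exp (K*t0))"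
  have \<epsilon>0: "\<epsilon> > 0" unfolding \<epsilon>_def using \<delta>0 by simp
  have \<epsilon>1: "\<epsilon> * exp (K*t0) < \<delta>" unfolding \<epsilon>_def using \<delta>0 by simp
  define z where "z t = a t - b t + \<epsilon> * exp (K*t)" for t
  have cz: "continuous_on {0..t0} z" unfolding z_def
    by (intro continuous_intros ca cb)
  define S where "S = {t\<in>{0..t0}. z t \<le> 0}"
  have "S = {0..t0} \<inter> z -` {..0}" unfolding S_def by auto
  then have "closed S" using continuous_closed_preimage[OF cz] by simp
  then have cS: "compact S" unfolding S_def
    by (metis (no_types, lifting) S_def bounded_closed_interval bounded_subset compact_eq_bounded_closed mem_Collect_eq subsetI)
  have "t0 \<in> S" unfolding S_def z_def using \<epsilon>1 \<delta>_def t0 by auto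
  then obtain ts where ts: "ts \<in> S" "\<forall>s\<in>S. ts \<le> s"
    using continuous_attains_inf[OF cS, of "\<lambda>t. t"] by (auto intro: continuous_on_id)
  have z0: "z 0 > 0" unfolding z_def using i0 \<epsilon>0 by simp
  have tsr: "0 \<le> ts" "ts \<le> t0" "z ts \<le> 0" using ts unfolding S_def by auto
  have ts0: "ts > 0" using z0 tsr by (cases "ts = 0") auto
  obtain s where s: "s \<ge> 0" "s \<le> ts" "z s = 0"
    using IVT2'[of z ts 0 0] tsr z0 continuous_on_subset[OF cz] by auto
  then have "s \<in> S" unfolding S_def using tsr by auto
  then have zts: "z ts = 0" using s ts by force
  have pos: "z s > 0" if "0 \<le> s" "s < ts" for s
  proof (rule ccontr)
    assume "\<not> z s > 0"
    then have "s \<in> S" unfolding S_def using that tsr by auto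
    then show False using ts that by force
  qed
  have atw: "at ts within {0..} = at ts" using ts0 by (intro at_within_interior) simp
  define E where "E = exp (K*ts)"
  have dz: "(z has_real_derivative (a' ts - b' ts + \<epsilon> * (K * E))) (at ts)"
    unfolding z_def E_def
    using da db tsr atw
    by (auto intro!: derivative_eq_intros)
  have zd: "a' ts - b' ts + \<epsilon> * (K * E) \<le> 0"
  proof (rule ccontr)
    assume "\<not> ?thesis"
    then obtain dd where dd: "dd > 0" "\<forall>h>0. h < dd \<longrightarrow> z (ts - h) < z ts"
      using DERIV_pos_inc_left[OF dz] by auto
    define hh where "hh = min dd ts / 2"
    have "z (ts - hh) < 0" using dd zts unfolding hh_def by (simp add: ts0)
    moreover have "z (ts - hh) > 0" using pos[of "ts - hh"] dd ts0 unfolding hh_def by auto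
    ultimately show False by simp
  qed
  have E0: "E > 0" unfolding E_def by simp
  have diff: "a ts - b ts = - (\<epsilon> * E)" using zts unfolding z_def E_def by simp
  have "F (a ts) - F (b ts) \<ge> - L * (\<epsilon> * E)"
    using lip[of "a ts" "b ts"] M tsr diff \<epsilon>0 E0 by (auto simp: abs_le_iff)
  moreover have "a' ts - b' ts \<ge> F (a ts) - F (b ts) - (c * a ts - c * b ts)"
    using ia ib gh ts0 by force
  moreover have "c * a ts - c * b ts = - c * (\<epsilon> * E)"
  proof -
    have "c * a ts - c * b ts = c * (a ts - b ts)" by (simp add: algebra_simps)
    then show ?thesis using diff by simp
  qed
  moreover have "\<epsilon> * (K * E) = L * (\<epsilon> * E) + \<bar>c\<bar> * (\<epsilon> * E) + \<epsilon> * E"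
    unfolding K_def by (simp add: algebra_simps)
  moreover have "(\<bar>c\<bar> + c) * (\<epsilon> * E) \<ge> 0" using \<epsilon>0 E0 by simp
  moreover have "\<epsilon> * E > 0" using \<epsilon>0 E0 by simp
  ultimately show False using zd by (simp add: algebra_simps)
qed

lemma pde_cmp:
  fixes w wt wx wxx :: "real \<Rightarrow> real \<Rightarrow> real" and d \<alpha> t0 x0 :: real
  assumes cont: "continuous_on ({0..} \<times> {0..1}) (\<lambda>(t,x). w t x)"
    and dt: "\<forall>t>0. \<forall>x\<in>{0<..<1}. ((\<lambda>s. w s x) has_real_derivative wt t x) (at t)"
    and dx: "\<forall>t>0. \<forall>x\<in>{0..1}. ((\<lambda>y. w t y) has_real_derivative wx t x) (at x within {0..1})"
    and dxx: "\<forall>t>0. \<forall>x\<in>{0<..<1}. ((\<lambda>y. wx t y) has_real_derivative wxx t x) (at x)"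
    and int: "\<forall>t>0. \<forall>x\<in>{0<..<1}. wt t x \<ge> d * wxx t x"
    and b0: "\<forall>t>0. - d * wx t 0 + \<alpha> * w t 0 \<ge> 0"
    and b1: "\<forall>t>0. d * wx t 1 + \<alpha> * w t 1 \<ge> 0"
    and init: "\<forall>x\<in>{0..1}. w 0 x \<ge> 0"
    and d0: "d > 0" and a0: "\<alpha> > 0" and t0: "t0 \<ge> 0" and x0: "x0 \<in> {0..1}"
  shows "w t0 x0 \<ge> 0"
proof (rule ccontr)
  assume neg: "\<not> w t0 x0 \<ge> 0"
  define \<epsilon> where "\<epsilon> = - w t0 x0 / (2 * (1 + t0))"
  have \<epsilon>0: "\<epsilon> > 0" unfolding \<epsilon>_def using neg t0 by (intro divide_pos_pos) auto
  have \<epsilon>1: "w t0 x0 + \<epsilon> * (1 + t0) < 0" 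
  proof -
    have "\<epsilon> * (1 + t0) = - w t0 x0 / 2" unfolding \<epsilon>_def using t0 by (simp add: field_simps)
    then show ?thesis using neg by linarith
  qed
  define z where "z t x = w t x + \<epsilon> * (1 + t)" for t x
  have cz: "continuous_on ({0..t0} \<times> {0..1}) (\<lambda>p. z (fst p) (snd p))"
  proof -
    have "continuous_on ({0..t0} \<times> {0..1}) (\<lambda>(t,x). w t x)"
      by (rule continuous_on_subset[OF cont]) auto
    then have "continuous_on ({0..t0} \<times> {0..1}) (\<lambda>p. w (fst p) (snd p))"
      by (simp add: case_prod_unfold)
    then show ?thesis unfolding z_def by (intro continuous_intros)
  qed
  define S where "S = {p\<in>{0..t0} \<times> {0..1}. z (fst p) (snd p) \<le> 0}"
  have "S = ({0..t0} \<times> {0..1}) \<inter> (\<lambda>p. z (fst p) (snd p)) -` {..0}" unfolding S_def by auto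
  then have "closed S" using continuous_closed_preimage[OF cz] by (simp add: closed_Times)
  moreover have "bounded S" 
    by (rule bounded_subset[of "{0..t0} \<times> {0..1}"]) (auto simp: S_def intro: bounded_Times)
  ultimately have cS: "compact S" using compact_eq_bounded_closed by blast
  have "(t0, x0) \<in> S" unfolding S_def z_def using \<epsilon>1 t0 x0 by auto
  then obtain p where p: "p \<in> S" "\<forall>q\<in>S. fst p \<le> fst q"
    using continuous_attains_inf[OF cS, of fst] continuous_on_fst[OF continuous_on_id, of S] by blast
  define ts where "ts = fst p"
  have tsr: "0 \<le> ts" "ts \<le> t0" "snd p \<in> {0..1}" "z ts (snd p) \<le> 0" 
    using p unfolding S_def ts_def by auto
  have ts0: "ts > 0"
  proof (rule ccontr)
    assume "\<not> ts > 0"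
    then have "ts = 0" using tsr by simp
    then show False using tsr init \<epsilon>0 unfolding z_def by force
  qed
  have dxts: "\<forall>x\<in>{0..1}. ((\<lambda>y. w ts y) has_real_derivative wx ts x) (at x within {0..1})"
    using dx ts0 by blast
  have cx: "continuous_on {0..1} (\<lambda>y. z ts y)"
    unfolding z_def using dxts by (intro continuous_intros DERIV_continuous_on) auto
  obtain xs where xs: "xs \<in> {0..1}" "\<forall>y\<in>{0..1}. z ts xs \<le> z ts y"
    using continuous_attains_inf[OF compact_Icc _ cx] by auto
  have zxs: "z ts xs \<le> 0" using xs tsr by force
  have wxs: "w ts xs < 0" using zxs \<epsilon>0 tsr unfolding z_def
    by (smt (verit, ccfv_SIG) mult_pos_pos)
  have pos: "z s xs > 0" if "0 \<le> s" "s < ts" for s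
  proof (rule ccontr)
    assume "\<not> z s xs > 0"
    then have "(s, xs) \<in> S" unfolding S_def using that tsr xs by auto
    then show False using p that ts_def by force
  qed
  have wmin: "w ts xs \<le> w ts y" if "y \<in> {0..1}" for y
    using xs that unfolding z_def by force
  consider "xs = 0" | "xs = 1" | "xs \<in> {0<..<1}" using xs by force
  then show False
  proof cases
    case 1
    have "wx ts 0 \<ge> 0"
    proof (rule ccontr)
      assume "\<not> ?thesis"
      then obtain dd where dd: "dd > 0" "\<forall>h>0. 0 + h \<in> {0..1} \<longrightarrow> h < dd \<longrightarrow> w ts 0 > w ts (0 + h)"
        using has_real_derivative_neg_dec_right[OF dxts[rule_format, of 0]] by force
      define hh where "hh = min dd 1 / 2"
      have "w ts 0 > w ts hh" using dd unfolding hh_def by auto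
      moreover have "w ts 0 \<le> w ts hh" using wmin[of hh] 1 dd unfolding hh_def by auto
      ultimately show False by simp
    qed
    moreover have "- d * wx ts 0 + \<alpha> * w ts 0 \<ge> 0" using b0 ts0 by blast
    moreover have "\<alpha> * w ts 0 < 0" using wxs 1 a0 by (simp add: mult_pos_neg)
    moreover have "d * wx ts 0 \<ge> 0" using d0 calculation(1) by simp
    ultimately show False by linarith
  next
    case 2
    have "wx ts 1 \<le> 0"
    proof (rule ccontr)
      assume "\<not> ?thesis"
      then obtain dd where dd: "dd > 0" "\<forall>h>0. 1 - h \<in> {0..1} \<longrightarrow> h < dd \<longrightarrow> w ts (1 - h) < w ts 1"
        using has_real_derivative_pos_inc_left[OF dxts[rule_format, of 1]] by force
      define hh where "hh = min dd 1 / 2"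
      have "w ts 1 > w ts (1 - hh)" using dd unfolding hh_def by auto
      moreover have "w ts 1 \<le> w ts (1 - hh)" using wmin[of "1 - hh"] 2 dd unfolding hh_def by auto
      ultimately show False by simp
    qed
    moreover have "d * wx ts 1 + \<alpha> * w ts 1 \<ge> 0" using b1 ts0 by blast
    moreover have "\<alpha> * w ts 1 < 0" using wxs 2 a0 by (simp add: mult_pos_neg)
    moreover have "d * wx ts 1 \<le> 0" using d0 calculation(1) by (simp add: mult_nonneg_nonpos)
    ultimately show False by linarith
  next
    case 3
    have dzt: "((\<lambda>s. z s xs) has_real_derivative (wt ts xs + \<epsilon>)) (at ts)"
      unfolding z_def using dt ts0 3 by (auto intro!: derivative_eq_intros)
    have wt: "wt ts xs + \<epsilon> \<le> 0"
    proof (rule ccontr)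
      assume "\<not> ?thesis"
      then obtain dd where dd: "dd > 0" "\<forall>h>0. h < dd \<longrightarrow> z (ts - h) xs < z ts xs"
        using DERIV_pos_inc_left[OF dzt] by auto
      define hh where "hh = min dd ts / 2"
      have "z (ts - hh) xs < 0" using dd zxs unfolding hh_def by (smt (verit) field_sum_of_halves ts0)
      moreover have "z (ts - hh) xs > 0" using pos[of "ts - hh"] dd ts0 unfolding hh_def by auto
      ultimately show False by simp
    qed
    have "d * wxx ts xs \<le> wt ts xs" using int ts0 3 by blast
    then have "d * wxx ts xs < 0" using wt \<epsilon>0 by linarith
    then have wxxn: "wxx ts xs < 0" using d0 by (simp add: mult_less_0_iff)
    have atx: "\<And>y. y \<in> {0<..<1} \<Longrightarrow> ((\<lambda>y. w ts y) has_real_derivative wx ts y) (at y)"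
    proof -
      fix y :: real assume y: "y \<in> {0<..<1}"
      have "at y within {0..1} = at y" using y by (intro at_within_interior) simp
      moreover have "((\<lambda>y. w ts y) has_real_derivative wx ts y) (at y within {0..1})" using dxts y by auto
      ultimately show "((\<lambda>y. w ts y) has_real_derivative wx ts y) (at y)" by simp
    qed
    have wx0: "wx ts xs = 0"
    proof (rule DERIV_local_min[OF atx[OF 3]])
      show "0 < min xs (1 - xs)" using 3 by simp
      show "\<forall>y. \<bar>xs - y\<bar> < min xs (1 - xs) \<longrightarrow> w ts xs \<le> w ts y"
        using wmin by (auto simp: abs_less_iff)
    qed
    obtain dd where dd: "dd > 0" "\<forall>h>0. h < dd \<longrightarrow> wx ts xs < wx ts (xs - h)"
      using DERIV_neg_dec_left[OF dxx[rule_format, OF ts0 3] wxxn] by auto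
    define aa where "aa = xs - min dd xs / 2"
    have aa: "0 < aa" "aa < xs" using 3 dd unfolding aa_def by auto
    obtain \<xi> where \<xi>: "aa < \<xi>" "\<xi> < xs" "w ts xs - w ts aa = (xs - aa) * wx ts \<xi>"
      using MVT2[OF aa(2), of "\<lambda>y. w ts y" "wx ts"] atx aa 3 by force
    have "wx ts \<xi> > 0" using dd(2)[rule_format, of "xs - \<xi>"] \<xi> wx0 unfolding aa_def by auto
    then have "w ts xs - w ts aa > 0" using \<xi> aa by simp
    moreover have "w ts xs \<le> w ts aa" using wmin aa 3 by auto
    ultimately show False by simp
  qed
qed


theorem proposition2p3:
  fixes f :: "real \<Rightarrow> real" and \<alpha> \<beta> d :: real
    and vu vl :: "nat \<Rightarrow> int \<Rightarrow> real \<Rightarrow> real \<Rightarrow> real"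
    and ru rl :: "nat \<Rightarrow> int \<Rightarrow> real \<Rightarrow> real"
  assumes "\<alpha> > 0" and "\<beta> > 0" and "d > 0"
    and "reaction_ok f"
    and "supersolution f \<alpha> \<beta> d vu ru"
    and "subsolution f \<alpha> \<beta> d vl rl"
    and "\<forall>j. \<forall>t\<ge>0. \<forall>x\<in>{0..1}. vl 0 j t x \<le> vu 0 j t x"
    and "\<forall>j. \<forall>t\<ge>0. rl 0 j t \<le> ru 0 j t"
    and "\<forall>n\<ge>1. \<forall>j. \<forall>x\<in>{0..1}. vl n j 0 x \<le> vu n j 0 x"
    and "\<forall>n\<ge>1. \<forall>j. rl n j 0 \<le> ru n j 0"
  shows "\<forall>n\<ge>1. \<forall>j. \<forall>t>0. (\<forall>x\<in>{0..1}. vl n j t x \<le> vu n j t x) \<and> rl n j t \<le> ru n j t"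
proof -
  note sup = assms(5)[unfolded supersolution_def scheme_rel_def initial_regular_def]
  note sub = assms(6)[unfolded subsolution_def scheme_rel_def initial_regular_def]
  have floc: "\<forall>x. \<exists>r>0. \<exists>L. lipschitz_on L (cball x r) f"
    using assms(4) unfolding reaction_ok_def by blast
  have step: "(\<forall>j. \<forall>t\<ge>0. rl (Suc m) j t \<le> ru (Suc m) j t) \<and>
      (\<forall>j. \<forall>t>0. \<forall>x\<in>{0..1}. vl (Suc m) j t x \<le> vu (Suc m) j t x)"
    if Q: "\<forall>j. \<forall>t>0. \<forall>x\<in>{0..1}. vl m j t x \<le> vu m j t x" for m
  proof -
    have Q': "\<forall>j. \<forall>t>0. \<forall>x\<in>{0..1}. vl m j t x \<le> vu m j t x" using Q .
    have R: "\<forall>j. \<forall>t\<ge>0. rl (Suc m) j t \<le> ru (Suc m) j t"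
    proof (intro allI impI)
      fix j and t :: real assume t: "t \<ge> 0"
      obtain rU' where U2: "\<forall>t\<ge>0. (ru (Suc m) j has_real_derivative rU' t) (at t within {0..})"
        and U3: "\<forall>t>0. rU' t \<ge> f (ru (Suc m) j t) + \<alpha> * (vu m j t 0 + vu m (j-1) t 1) - 2 * \<beta> * ru (Suc m) j t"
        using sup[THEN conjunct2, rule_format, of "Suc m" j] by auto
      obtain rL' where L2: "\<forall>t\<ge>0. (rl (Suc m) j has_real_derivative rL' t) (at t within {0..})"
        and L3: "\<forall>t>0. rL' t \<le> f (rl (Suc m) j t) + \<alpha> * (vl m j t 0 + vl m (j-1) t 1) - 2 * \<beta> * rl (Suc m) j t"
        using sub[THEN conjunct2, rule_format, of "Suc m" j] by auto
      show "rl (Suc m) j t \<le> ru (Suc m) j t"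
      proof (rule ode_cmp[OF floc U2 L2, of "\<lambda>t. \<alpha> * (vu m j t 0 + vu m (j-1) t 1)" "2 * \<beta>"
            "\<lambda>t. \<alpha> * (vl m j t 0 + vl m (j-1) t 1)"])
        show "\<forall>t>0. f (ru (Suc m) j t) + \<alpha> * (vu m j t 0 + vu m (j-1) t 1) - 2 * \<beta> * ru (Suc m) j t \<le> rU' t"
          using U3 by blast
        show "\<forall>t>0. rL' t \<le> f (rl (Suc m) j t) + \<alpha> * (vl m j t 0 + vl m (j-1) t 1) - 2 * \<beta> * rl (Suc m) j t"
          using L3 by blast
        show "\<forall>t>0. \<alpha> * (vl m j t 0 + vl m (j-1) t 1) \<le> \<alpha> * (vu m j t 0 + vu m (j-1) t 1)"
        proof (intro allI impI)
          fix t :: real assume "t > 0"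
          then have "vl m j t 0 + vl m (j-1) t 1 \<le> vu m j t 0 + vu m (j-1) t 1"
            using Q' by (smt (verit) atLeastAtMost_iff)
          then show "\<alpha> * (vl m j t 0 + vl m (j-1) t 1) \<le> \<alpha> * (vu m j t 0 + vu m (j-1) t 1)"
            using assms(1) by (simp add: mult_left_mono)
        qed
        show "rl (Suc m) j 0 \<le> ru (Suc m) j 0" using assms(10) by simp
        show "0 \<le> t" using t .
      qed
    qed
    have V: "\<forall>j. \<forall>t>0. \<forall>x\<in>{0..1}. vl (Suc m) j t x \<le> vu (Suc m) j t x"
    proof (intro allI impI ballI)
      fix j and t x :: real assume t: "t > 0" and x: "x \<in> {0..1}"
      obtain vtU vxU vxxU where
        U0: "continuous_on ({0..} \<times> {0..1}) (\<lambda>(t,x). vu (Suc m) j t x)" and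
        U1: "\<forall>t>0. \<forall>x\<in>{0<..<1}. ((\<lambda>s. vu (Suc m) j s x) has_real_derivative vtU t x) (at t)" and
        U2: "\<forall>t>0. \<forall>x\<in>{0..1}. ((\<lambda>y. vu (Suc m) j t y) has_real_derivative vxU t x) (at x within {0..1})" and
        U3: "\<forall>t>0. \<forall>x\<in>{0<..<1}. ((\<lambda>y. vxU t y) has_real_derivative vxxU t x) (at x)" and
        U4: "\<forall>t>0. (\<forall>x\<in>{0<..<1}. vtU t x \<ge> d * vxxU t x) \<and>
          (- d * vxU t 0 + \<alpha> * vu (Suc m) j t 0 \<ge> \<beta> * ru (Suc m) j t) \<and>
          (d * vxU t 1 + \<alpha> * vu (Suc m) j t 1 \<ge> \<beta> * ru (Suc m) (j+1) t)"
        using sup[THEN conjunct2, rule_format, of "Suc m" j] by auto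
      obtain vtL vxL vxxL where
        L0: "continuous_on ({0..} \<times> {0..1}) (\<lambda>(t,x). vl (Suc m) j t x)" and
        L1: "\<forall>t>0. \<forall>x\<in>{0<..<1}. ((\<lambda>s. vl (Suc m) j s x) has_real_derivative vtL t x) (at t)" and
        L2: "\<forall>t>0. \<forall>x\<in>{0..1}. ((\<lambda>y. vl (Suc m) j t y) has_real_derivative vxL t x) (at x within {0..1})" and
        L3: "\<forall>t>0. \<forall>x\<in>{0<..<1}. ((\<lambda>y. vxL t y) has_real_derivative vxxL t x) (at x)" and
        L4: "\<forall>t>0. (\<forall>x\<in>{0<..<1}. vtL t x \<le> d * vxxL t x) \<and>
          (- d * vxL t 0 + \<alpha> * vl (Suc m) j t 0 \<le> \<beta> * rl (Suc m) j t) \<and>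
          (d * vxL t 1 + \<alpha> * vl (Suc m) j t 1 \<le> \<beta> * rl (Suc m) (j+1) t)"
        using sub[THEN conjunct2, rule_format, of "Suc m" j] by auto
      have "0 \<le> vu (Suc m) j t x - vl (Suc m) j t x"
      proof (rule pde_cmp[where w = "\<lambda>t x. vu (Suc m) j t x - vl (Suc m) j t x"
          and wt = "\<lambda>t x. vtU t x - vtL t x" and wx = "\<lambda>t x. vxU t x - vxL t x"
          and wxx = "\<lambda>t x. vxxU t x - vxxL t x" and d = d and \<alpha> = \<alpha>])
        show "continuous_on ({0..} \<times> {0..1}) (\<lambda>(t,x). vu (Suc m) j t x - vl (Suc m) j t x)"
          using continuous_on_diff[OF U0 L0] by (simp add: case_prod_unfold)
        show "\<forall>t>0. \<forall>x\<in>{0<..<1}. ((\<lambda>s. vu (Suc m) j s x - vl (Suc m) j s x) has_real_derivative vtU t x - vtL t x) (at t)"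
          using U1 L1 by (auto intro!: derivative_intros)
        show "\<forall>t>0. \<forall>x\<in>{0..1}. ((\<lambda>y. vu (Suc m) j t y - vl (Suc m) j t y) has_real_derivative vxU t x - vxL t x) (at x within {0..1})"
          using U2 L2 by (auto intro!: derivative_intros)
        show "\<forall>t>0. \<forall>x\<in>{0<..<1}. ((\<lambda>y. vxU t y - vxL t y) has_real_derivative vxxU t x - vxxL t x) (at x)"
          using U3 L3 by (auto intro!: derivative_intros)
        show "\<forall>t>0. \<forall>x\<in>{0<..<1}. d * (vxxU t x - vxxL t x) \<le> vtU t x - vtL t x"
          using U4 L4 by (fastforce simp: right_diff_distrib)
        show "\<forall>t>0. 0 \<le> - d * (vxU t 0 - vxL t 0) + \<alpha> * (vu (Suc m) j t 0 - vl (Suc m) j t 0)"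
        proof (intro allI impI)
          fix t :: real assume "t > 0"
          then have "rl (Suc m) j t \<le> ru (Suc m) j t" using R by simp
          then have "\<beta> * rl (Suc m) j t \<le> \<beta> * ru (Suc m) j t" using assms(2) by simp
          then show "0 \<le> - d * (vxU t 0 - vxL t 0) + \<alpha> * (vu (Suc m) j t 0 - vl (Suc m) j t 0)"
            using U4[rule_format, OF \<open>t > 0\<close>] L4[rule_format, OF \<open>t > 0\<close>]
            unfolding right_diff_distrib by linarith
        qed
        show "\<forall>t>0. 0 \<le> d * (vxU t 1 - vxL t 1) + \<alpha> * (vu (Suc m) j t 1 - vl (Suc m) j t 1)"
        proof (intro allI impI)
          fix t :: real assume "t > 0"
          then have "rl (Suc m) (j+1) t \<le> ru (Suc m) (j+1) t" using R by simp
          then have "\<beta> * rl (Suc m) (j+1) t \<le> \<beta> * ru (Suc m) (j+1) t" using assms(2) by simp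
          then show "0 \<le> d * (vxU t 1 - vxL t 1) + \<alpha> * (vu (Suc m) j t 1 - vl (Suc m) j t 1)"
            using U4[rule_format, OF \<open>t > 0\<close>] L4[rule_format, OF \<open>t > 0\<close>]
            unfolding right_diff_distrib by linarith
        qed
        show "\<forall>x\<in>{0..1}. 0 \<le> vu (Suc m) j 0 x - vl (Suc m) j 0 x"
          using assms(9) by simp
      qed (use assms t x in auto)
      then show "vl (Suc m) j t x \<le> vu (Suc m) j t x" by simp
    qed
    show ?thesis using R V by blast
  qed
  have Qall: "\<forall>j. \<forall>t>0. \<forall>x\<in>{0..1}. vl m j t x \<le> vu m j t x" for m
  proof (induction m)
    case 0
    then show ?case using assms(7) by simp
  next
    case (Suc m)
    then show ?case using step by blast
  qed
  show ?thesis
  proof (intro allI impI)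
    fix n :: nat and j :: int and t :: real assume n: "n \<ge> 1" and t: "t > 0"
    then obtain m where m: "n = Suc m" by (cases n) auto
    show "(\<forall>x\<in>{0..1}. vl n j t x \<le> vu n j t x) \<and> rl n j t \<le> ru n j t"
      using step[OF Qall[of m]] Qall[of n] t m by simp
  qed
qed

end
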